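(* Let $X$ be a random vector in $\mathbb{R}^n$, let $T=g(X)$ for a deterministic function $g:\mathbb{R}^n\to\mathcal T$ (the task variable, discrete or continuous), let $f_{\boldsymbol\eta}:\mathbb{R}^n\to\mathbb{R}^m$ be a deterministic function with parameter $\boldsymbol\eta\in\mathbb{R}^d$, let $t>0$, let $Z_t\sim\mathcal N(\mathbf 0,t\mathbf I_m)$ be independent of $X$, and set $Y_t=f_{\boldsymbol\eta}(X)+Z_t$. Let $s_{Y_t}(\mathbf y)=\nabla_{\mathbf y}\log p_{Y_t,\boldsymbol\eta}(\mathbf y)$ be the marginal score of $Y_t$ and $s_{Y_t|T}(\mathbf y|\tau)=\nabla_{\mathbf y}\log p_{Y_t|T,\boldsymbol\eta}(\mathbf y|\tau)$ the conditional score of $Y_t$ given $T=\tau$. Under standard regularity conditions ($f_{\boldsymbol\eta}$ differentiable in $\boldsymbol\eta$, and exchange of differentiation in $\boldsymbol\eta$ with expectation/integration permitted), $$\nabla_{\boldsymbol\eta} I(T;Y_t)=\mathbb{E}_{X,Z_t}\!\left[Df_{\boldsymbol\eta}(X)^\top\big(s_{Y_t|T}(Y_t|T)-s_{Y_t}(Y_t)\big)\right],$$ where $Df_{\boldsymbol\eta}(\mathbf x)\in\mathbb{R}^{m\times d}$ is the Jacobian of $\boldsymbol\eta\mapsto f_{\boldsymbol\eta}(\mathbf x)$.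
   Context: $I(\cdot;\cdot)$ denotes mutual information. The expectation over $T$ is implicit since $T=g(X)$ is determined by $X$. The densities $p_{Y_t,\boldsymbol\eta}$ and $p_{Y_t|T,\boldsymbol\eta}$ depend on $\boldsymbol\eta$ through $f_{\boldsymbol\eta}$. *)

theory Defs
  imports "HOL-Analysis.Analysis" "HOL-Probability.Probability"
begin

definition gauss_vec_density :: "real \<Rightarrow> real^'m \<Rightarrow> real" where
  "gauss_vec_density t z =
     (2 * pi * t) powr (- real CARD('m) / 2) * exp (- (norm z)\<^sup>2 / (2 * t))"

definition gauss_vec :: "real \<Rightarrow> (real^'m) measure" where
  "gauss_vec t = density lborel (\<lambda>z. ennreal (gauss_vec_density t z))"

definition grad :: "('a::real_inner \<Rightarrow> real) \<Rightarrow> 'a \<Rightarrow> 'a" where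
  "grad h x = (SOME G. (h has_derivative (\<lambda>v. G \<bullet> v)) (at x))"

end

theory Submission
  imports Defs
begin

lemma gauss_density_prod:
  assumes t: "t > 0"
  shows "gauss_vec_density t (z::real^'m) = (\<Prod>b\<in>Basis. normal_density 0 (sqrt t) (z \<bullet> b))"
proof -
  define c where "c = 1 / sqrt (2 * pi * t)"
  have n: "(norm z)\<^sup>2 = (\<Sum>b\<in>Basis. (z \<bullet> b)\<^sup>2)"
    unfolding power2_norm_eq_inner by (subst euclidean_inner) (simp add: power2_eq_square)
  have 1: "(\<Prod>b\<in>Basis. normal_density 0 (sqrt t) (z \<bullet> b))
      = (\<Prod>b\<in>(Basis::(real^'m) set). c * exp (- (z \<bullet> b)\<^sup>2 / (2 * t)))"
    using t by (simp add: normal_density_def c_def)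
  have 2: "(\<Prod>b\<in>(Basis::(real^'m) set). c * exp (- (z \<bullet> b)\<^sup>2 / (2 * t)))
      = c ^ card (Basis::(real^'m) set) * (\<Prod>b\<in>(Basis::(real^'m) set). exp (- (z \<bullet> b)\<^sup>2 / (2 * t)))"
    by (simp only: prod.distrib prod_constant)
  have 3: "(\<Prod>b\<in>(Basis::(real^'m) set). exp (- (z \<bullet> b)\<^sup>2 / (2 * t))) = exp (\<Sum>b\<in>(Basis::(real^'m) set). - (z \<bullet> b)\<^sup>2 / (2 * t))"
    by (simp add: exp_sum)
  have 4: "(\<Sum>b\<in>(Basis::(real^'m) set). - (z \<bullet> b)\<^sup>2 / (2 * t)) = - (norm z)\<^sup>2 / (2 * t)"
    unfolding n by (simp add: sum_divide_distrib[symmetric] sum_negf)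
  have p: "2 * pi * t > 0" using t by simp
  have 5: "c ^ CARD('m) = (2 * pi * t) powr (- real CARD('m) / 2)"
  proof -
    have nz: "2 * pi * t \<noteq> 0" using p by linarith
    have s: "sqrt (2 * pi * t) = (2 * pi * t) powr (1/2)"
      by (rule powr_half_sqrt[symmetric]) (use p in simp)
    have cc: "c = (2 * pi * t) powr (- (1/2))"
      unfolding c_def s powr_minus by (simp only: inverse_eq_divide)
    have e: "real CARD('m) * (- (1/2)) = - real CARD('m) / 2" by simp
    show ?thesis
      unfolding cc powr_power[OF nz] e ..
  qed
  have 6: "card (Basis::(real^'m) set) = CARD('m)" by simp
  show ?thesis unfolding 1 2 3 4 6 5 gauss_vec_density_def ..
qed

lemma gauss_vec_density_meas[measurable]: "gauss_vec_density t \<in> borel_measurable borel"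
  unfolding gauss_vec_density_def[abs_def] by measurable

lemma prob_space_gauss_vec:
  assumes t: "t > 0"
  shows "prob_space (gauss_vec t :: (real^'m) measure)"
proof
  have "emeasure (gauss_vec t :: (real^'m) measure) (space (gauss_vec t)) =
     (\<integral>\<^sup>+z. (\<Prod>b\<in>(Basis::(real^'m) set). ennreal (normal_density 0 (sqrt t) (z \<bullet> b))) \<partial>lborel)"
    unfolding gauss_vec_def using t
    by (subst emeasure_density) (auto simp: gauss_density_prod[OF t] prod_ennreal)
  also have "\<dots> = (\<Prod>b\<in>(Basis::(real^'m) set). (\<integral>\<^sup>+x. ennreal (normal_density 0 (sqrt t) x) \<partial>lborel))"
    by (rule nn_integral_lborel_prod) auto
  also have "\<dots> = 1"
  proof -
    have "(\<integral>\<^sup>+x. ennreal (normal_density 0 (sqrt t) x) \<partial>lborel) = 1"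
      using t by (subst nn_integral_eq_integral) auto
    then show ?thesis by simp
  qed
  finally show "emeasure (gauss_vec t :: (real^'m) measure) (space (gauss_vec t)) = 1" .
qed

lemma grad_works_if:
  fixes h :: "'a::euclidean_space \<Rightarrow> real"
  assumes "(h has_derivative (\<lambda>v. G \<bullet> v)) (at x)"
  shows "(h has_derivative (\<lambda>v. grad h x \<bullet> v)) (at x)"
proof -
  have ex: "\<exists>G. (h has_derivative (\<lambda>v. G \<bullet> v)) (at x)" using assms by blast
  show ?thesis unfolding grad_def by (rule someI_ex[OF ex])
qed

lemma grad_eq:
  fixes h :: "'a::euclidean_space \<Rightarrow> real"
  assumes "(h has_derivative (\<lambda>v. G \<bullet> v)) (at x)"
  shows "grad h x = G"
proof -
  have "(\<lambda>v. grad h x \<bullet> v) = (\<lambda>v. G \<bullet> v)"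
    by (rule has_derivative_unique[OF grad_works_if[OF assms] assms])
  then have "grad h x \<bullet> (grad h x - G) = G \<bullet> (grad h x - G)" by metis
  then have "(grad h x - G) \<bullet> (grad h x - G) = 0" by (simp add: inner_diff_left)
  then show ?thesis by simp
qed

lemma lin_rep:
  fixes D :: "'a::euclidean_space \<Rightarrow> real"
  assumes "linear D"
  shows "D = (\<lambda>v. (\<Sum>b\<in>Basis. D b *\<^sub>R b) \<bullet> v)"
proof
  fix v :: 'a
  have "D v = D (\<Sum>b\<in>Basis. (v \<bullet> b) *\<^sub>R b)" by (simp add: euclidean_representation)
  also have "\<dots> = (\<Sum>b\<in>Basis. (v \<bullet> b) * D b)"
    using assms by (simp add: linear_sum linear_scale)
  also have "\<dots> = (\<Sum>b\<in>Basis. D b *\<^sub>R b) \<bullet> v"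
    by (simp add: inner_sum_right inner_commute mult.commute)
  finally show "D v = (\<Sum>b\<in>Basis. D b *\<^sub>R b) \<bullet> v" .
qed

lemma has_derivative_grad_rep:
  fixes h :: "'a::euclidean_space \<Rightarrow> real"
  assumes "(h has_derivative D) (at x)"
  shows "(h has_derivative (\<lambda>v. grad h x \<bullet> v)) (at x)" "D = (\<lambda>v. grad h x \<bullet> v)"
proof -
  have "linear D" using assms has_derivative_bounded_linear bounded_linear.linear by blast
  then have "D = (\<lambda>v. (\<Sum>b\<in>Basis. D b *\<^sub>R b) \<bullet> v)" by (rule lin_rep)
  then have d: "(h has_derivative (\<lambda>v. (\<Sum>b\<in>Basis. D b *\<^sub>R b) \<bullet> v)) (at x)" using assms by simp
  show "(h has_derivative (\<lambda>v. grad h x \<bullet> v)) (at x)" by (rule grad_works_if[OF d])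
  then show "D = (\<lambda>v. grad h x \<bullet> v)" using has_derivative_unique[OF assms] by blast
qed

lemma grad_works:
  fixes h :: "'a::euclidean_space \<Rightarrow> real"
  assumes "h differentiable (at x)"
  shows "(h has_derivative (\<lambda>v. grad h x \<bullet> v)) (at x)"
  using assms has_derivative_grad_rep(1) unfolding differentiable_def by blast

lemma chain2:
  fixes F :: "('a::euclidean_space \<times> 'b::euclidean_space) \<Rightarrow> real"
  assumes F: "F differentiable (at (x0, y0))" and u: "(u has_derivative U) (at x0)" and u0: "u x0 = y0"
  shows "((\<lambda>x. F (x, u x)) has_derivative
           (\<lambda>h. grad (\<lambda>x. F (x, y0)) x0 \<bullet> h + grad (\<lambda>y. F (x0, y)) y0 \<bullet> U h)) (at x0)"
proof -
  obtain D where D: "(F has_derivative D) (at (x0, y0))" using F unfolding differentiable_def by blast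
  have lD: "linear D" using D has_derivative_bounded_linear bounded_linear.linear by blast
  have p1: "((\<lambda>x. (x, u x)) has_derivative (\<lambda>h. (h, U h))) (at x0)"
    by (intro has_derivative_Pair has_derivative_ident u)
  have c1: "((\<lambda>x. F (x, u x)) has_derivative (\<lambda>h. D (h, U h))) (at x0)"
    using has_derivative_compose[OF p1, of F D] D u0 by simp
  have p2: "((\<lambda>x. (x, y0)) has_derivative (\<lambda>h. (h, 0))) (at x0)"
    by (intro has_derivative_Pair has_derivative_ident has_derivative_const)
  have c2: "((\<lambda>x. F (x, y0)) has_derivative (\<lambda>h. D (h, 0))) (at x0)"
    using has_derivative_compose[OF p2, of F D] D by simp
  have p3: "((\<lambda>y. (x0, y)) has_derivative (\<lambda>k. (0, k))) (at y0)"
    by (intro has_derivative_Pair has_derivative_ident has_derivative_const)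
  have c3: "((\<lambda>y. F (x0, y)) has_derivative (\<lambda>k. D (0, k))) (at y0)"
    using has_derivative_compose[OF p3, of F D] D by simp
  have e2: "(\<lambda>h. D (h, 0)) = (\<lambda>h. grad (\<lambda>x. F (x, y0)) x0 \<bullet> h)"
    by (rule has_derivative_grad_rep(2)[OF c2])
  have e3: "(\<lambda>k. D (0, k)) = (\<lambda>k. grad (\<lambda>y. F (x0, y)) y0 \<bullet> k)"
    by (rule has_derivative_grad_rep(2)[OF c3])
  have "\<And>h. D (h, U h) = D (h, 0) + D (0, U h)"
  proof -
    fix h
    have "D ((h, 0) + (0, U h)) = D (h, 0) + D (0, U h)" by (rule linear_add[OF lD])
    then show "D (h, U h) = D (h, 0) + D (0, U h)" by simp
  qed
  then have "(\<lambda>h. D (h, U h)) = (\<lambda>h. grad (\<lambda>x. F (x, y0)) x0 \<bullet> h + grad (\<lambda>y. F (x0, y)) y0 \<bullet> U h)"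
    using e2 e3 by (metis (no_types, lifting))
  then show ?thesis using c1 by simp
qed

lemma grad_ln:
  fixes h :: "'a::euclidean_space \<Rightarrow> real"
  assumes "h differentiable (at x)" "h x > 0"
  shows "grad (\<lambda>y. ln (h y)) x = (1 / h x) *\<^sub>R grad h x"
proof (rule grad_eq)
  have "((\<lambda>y. ln (h y)) has_derivative (\<lambda>v. (grad h x \<bullet> v) * inverse (h x))) (at x)"
    by (rule DERIV_compose_FDERIV[OF DERIV_ln[OF assms(2)] grad_works[OF assms(1)]])
  then show "((\<lambda>y. ln (h y)) has_derivative (\<lambda>v. ((1 / h x) *\<^sub>R grad h x) \<bullet> v)) (at x)"
    by (simp add: divide_inverse mult.commute)
qed

lemma differentiable_ln:
  fixes h :: "'a::euclidean_space \<Rightarrow> real"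
  assumes "h differentiable (at x)" "h x > 0"
  shows "(\<lambda>y. ln (h y)) differentiable (at x)"
  using DERIV_compose_FDERIV[OF DERIV_ln[OF assms(2)] grad_works[OF assms(1)]]
  unfolding differentiable_def by blast

lemma inner_transpose: "(s::real^'m) \<bullet> ((J::real^'d^'m) *v h) = (transpose J *v s) \<bullet> h"
  by (simp add: dot_lmul_matrix)

lemma diff_slice1:
  fixes F :: "('a::real_normed_vector \<times> 'b::real_normed_vector) \<Rightarrow> real"
  assumes "F differentiable (at (x0, y0))"
  shows "(\<lambda>x. F (x, y0)) differentiable (at x0)"
proof -
  have "(\<lambda>x. (x, y0)) differentiable (at x0)"
    by (intro differentiable_Pair differentiable_ident differentiable_const)
  then have "(F \<circ> (\<lambda>x. (x, y0))) differentiable (at x0)"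
    using differentiable_chain_at assms by fastforce
  then show ?thesis by (simp add: comp_def)
qed


lemma diff_quot_lim:
  fixes \<phi> :: "'a::euclidean_space \<Rightarrow> real"
  assumes d: "(\<phi> has_derivative (\<lambda>v. G \<bullet> v)) (at \<eta>0)"
  shows "(\<lambda>k. (\<phi> (\<eta>0 + inverse (real (Suc k)) *\<^sub>R b) - \<phi> \<eta>0) * real (Suc k)) \<longlonglongrightarrow> G \<bullet> b"
proof -
  have l: "((\<lambda>s::real. \<eta>0 + s *\<^sub>R b) has_derivative (\<lambda>s. s *\<^sub>R b)) (at 0)"
    by (auto intro!: derivative_eq_intros)
  have "((\<lambda>s::real. \<phi> (\<eta>0 + s *\<^sub>R b)) has_derivative (\<lambda>s. G \<bullet> (s *\<^sub>R b))) (at 0)"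
  proof -
    have d': "(\<phi> has_derivative (\<lambda>v. G \<bullet> v)) (at (\<eta>0 + 0 *\<^sub>R b))" using d by simp
    show ?thesis by (rule has_derivative_compose[OF l d'])
  qed
  then have "((\<lambda>s::real. \<phi> (\<eta>0 + s *\<^sub>R b)) has_field_derivative (G \<bullet> b)) (at 0)"
    by (rule has_derivative_imp_has_field_derivative) simp
  then have t: "((\<lambda>s. (\<phi> (\<eta>0 + s *\<^sub>R b) - \<phi> (\<eta>0 + 0 *\<^sub>R b)) / (s - 0)) \<longlongrightarrow> G \<bullet> b) (at 0)"
    unfolding has_field_derivative_iff .
  have f: "filterlim (\<lambda>k. inverse (real (Suc k))) (at (0::real)) sequentially"
    unfolding filterlim_at using LIMSEQ_inverse_real_of_nat by auto
  have "(\<lambda>k. (\<phi> (\<eta>0 + inverse (real (Suc k)) *\<^sub>R b) - \<phi> (\<eta>0 + 0 *\<^sub>R b)) / (inverse (real (Suc k)) - 0)) \<longlonglongrightarrow> G \<bullet> b"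
    by (rule filterlim_compose[OF t f])
  then show ?thesis by (simp add: divide_inverse)
qed

lemma grad_measurable:
  fixes F :: "'a::euclidean_space \<Rightarrow> 'b \<Rightarrow> real"
  assumes meas: "\<And>\<eta>. (\<lambda>x. F \<eta> x) \<in> borel_measurable N"
    and diff: "\<And>x. x \<in> space N \<Longrightarrow> (\<lambda>\<eta>. F \<eta> x) differentiable (at \<eta>0)"
  shows "(\<lambda>x. grad (\<lambda>\<eta>. F \<eta> x) \<eta>0) \<in> borel_measurable N"
proof (rule borel_measurable_LIMSEQ_metric)
  fix k :: nat
  show "(\<lambda>x. \<Sum>b\<in>Basis. ((F (\<eta>0 + inverse (real (Suc k)) *\<^sub>R b) x - F \<eta>0 x) * real (Suc k)) *\<^sub>R b) \<in> borel_measurable N"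
    using meas by measurable
next
  fix x assume x: "x \<in> space N"
  have d: "((\<lambda>\<eta>. F \<eta> x) has_derivative (\<lambda>v. grad (\<lambda>\<eta>. F \<eta> x) \<eta>0 \<bullet> v)) (at \<eta>0)"
    by (rule grad_works[OF diff[OF x]])
  have "(\<lambda>k. \<Sum>b\<in>Basis. ((F (\<eta>0 + inverse (real (Suc k)) *\<^sub>R b) x - F \<eta>0 x) * real (Suc k)) *\<^sub>R b)
      \<longlonglongrightarrow> (\<Sum>b\<in>Basis. (grad (\<lambda>\<eta>. F \<eta> x) \<eta>0 \<bullet> b) *\<^sub>R b)"
    by (intro tendsto_sum tendsto_scaleR tendsto_const diff_quot_lim[OF d])
  then show "(\<lambda>k. \<Sum>b\<in>Basis. ((F (\<eta>0 + inverse (real (Suc k)) *\<^sub>R b) x - F \<eta>0 x) * real (Suc k)) *\<^sub>R b)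
      \<longlonglongrightarrow> grad (\<lambda>\<eta>. F \<eta> x) \<eta>0"
    by (simp add: euclidean_representation)
qed


theorem proposition3:
  fixes \<mu> :: "(real^'n) measure"
    and S :: "'c measure"
    and g :: "real^'n \<Rightarrow> 'c"
    and f :: "real^'d \<Rightarrow> real^'n \<Rightarrow> real^'m"
    and Jf :: "real^'n \<Rightarrow> real^'d^'m"
    and t :: real
    and \<eta>0 :: "real^'d"
    and pY :: "real^'d \<Rightarrow> real^'m \<Rightarrow> real"
    and pYT :: "real^'d \<Rightarrow> 'c \<Rightarrow> real^'m \<Rightarrow> real"
  defines "M \<equiv> \<mu> \<Otimes>\<^sub>M gauss_vec t"
    and "T \<equiv> (\<lambda>\<omega>::(real^'n) \<times> (real^'m). g (fst \<omega>))"
    and "Y \<equiv> (\<lambda>\<eta> (\<omega>::(real^'n) \<times> (real^'m)). f \<eta> (fst \<omega>) + snd \<omega>)"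
    and "\<nu> \<equiv> distr (\<mu> \<Otimes>\<^sub>M gauss_vec t) S (\<lambda>\<omega>::(real^'n) \<times> (real^'m). g (fst \<omega>))"
    and "L \<equiv> (\<lambda>\<eta> (\<omega>::(real^'n) \<times> (real^'m)).
            ln (pYT \<eta> (g (fst \<omega>)) (f \<eta> (fst \<omega>) + snd \<omega>))
          - ln (pY \<eta> (f \<eta> (fst \<omega>) + snd \<omega>)))"
    and "sY \<equiv> (\<lambda>y. grad (\<lambda>y'. ln (pY \<eta>0 y')) y)"
    and "sYT \<equiv> (\<lambda>\<tau> y. grad (\<lambda>y'. ln (pYT \<eta>0 \<tau> y')) y)"
  assumes prob_X: "prob_space \<mu>"
    and sets_X: "sets \<mu> = sets borel"
    and g_meas: "g \<in> borel \<rightarrow>\<^sub>M S"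
    and f_meas: "\<And>\<eta>. f \<eta> \<in> borel_measurable borel"
    and t_pos: "t > 0"
    \<comment> \<open>p_{Y_t,eta} is the density of Y_t\<close>
    and pY_meas: "\<And>\<eta>. pY \<eta> \<in> borel_measurable borel"
    and pY_pos: "\<And>\<eta> y. pY \<eta> y > 0"
    and pY_dens: "\<And>\<eta>. distr M borel (Y \<eta>) = density lborel (\<lambda>y. ennreal (pY \<eta> y))"
    \<comment> \<open>p_{Y_t|T,eta} is the conditional density of Y_t given T
        (density of the law of (T,Y_t) w.r.t. (law of T) x Lebesgue),
        normalised to be a probability density for every tau\<close>
    and pYT_meas: "\<And>\<eta>. (\<lambda>(\<tau>, y). pYT \<eta> \<tau> y) \<in> borel_measurable (S \<Otimes>\<^sub>M borel)"
    and pYT_pos: "\<And>\<eta> \<tau> y. pYT \<eta> \<tau> y > 0"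
    and pYT_norm: "\<And>\<eta> \<tau>. integrable lborel (pYT \<eta> \<tau>) \<and> (\<integral>y. pYT \<eta> \<tau> y \<partial>lborel) = 1"
    and pYT_dens: "\<And>\<eta>. distr M (S \<Otimes>\<^sub>M borel) (\<lambda>\<omega>. (T \<omega>, Y \<eta> \<omega>))
                        = density (\<nu> \<Otimes>\<^sub>M lborel) (\<lambda>(\<tau>, y). ennreal (pYT \<eta> \<tau> y))"
    \<comment> \<open>differentiability\<close>
    and f_diff: "\<And>x. ((\<lambda>\<eta>. f \<eta> x) has_derivative (\<lambda>h. Jf x *v h)) (at \<eta>0)"
    and pY_diff: "\<And>y. (\<lambda>p. pY (fst p) (snd p)) differentiable (at (\<eta>0, y))"
    and pYT_diff: "\<And>\<tau> y. (\<lambda>p. pYT (fst p) \<tau> (snd p)) differentiable (at (\<eta>0, y))"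
    \<comment> \<open>exchange of differentiation in eta with expectation over (X, Z_t)\<close>
    and L_int: "\<And>\<eta>. integrable M (L \<eta>)"
    and dL_int: "integrable M (\<lambda>\<omega>. grad (\<lambda>\<eta>. L \<eta> \<omega>) \<eta>0)"
    and exch_E: "((\<lambda>\<eta>. \<integral>\<omega>. L \<eta> \<omega> \<partial>M) has_derivative
                   (\<lambda>h. (\<integral>\<omega>. grad (\<lambda>\<eta>. L \<eta> \<omega>) \<eta>0 \<partial>M) \<bullet> h)) (at \<eta>0)"
    and dpY_int: "integrable M (\<lambda>\<omega>. grad (\<lambda>\<eta>. ln (pY \<eta> (Y \<eta>0 \<omega>))) \<eta>0)"
    and dpYT_int: "integrable M (\<lambda>\<omega>. grad (\<lambda>\<eta>. ln (pYT \<eta> (T \<omega>) (Y \<eta>0 \<omega>))) \<eta>0)"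
    \<comment> \<open>exchange of differentiation in eta with integration over y\<close>
    and exch_pY: "integrable lborel (\<lambda>y. grad (\<lambda>\<eta>. pY \<eta> y) \<eta>0) \<and>
                  ((\<lambda>\<eta>. \<integral>y. pY \<eta> y \<partial>lborel) has_derivative
                   (\<lambda>h. (\<integral>y. grad (\<lambda>\<eta>. pY \<eta> y) \<eta>0 \<partial>lborel) \<bullet> h)) (at \<eta>0)"
    and exch_pYT: "\<And>\<tau>. \<tau> \<in> space S \<Longrightarrow>
                  integrable lborel (\<lambda>y. grad (\<lambda>\<eta>. pYT \<eta> \<tau> y) \<eta>0) \<and>
                  ((\<lambda>\<eta>. \<integral>y. pYT \<eta> \<tau> y \<partial>lborel) has_derivative
                   (\<lambda>h. (\<integral>y. grad (\<lambda>\<eta>. pYT \<eta> \<tau> y) \<eta>0 \<partial>lborel) \<bullet> h)) (at \<eta>0)"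
  shows "((\<lambda>\<eta>. prob_space.mutual_information M (exp 1) S borel T (Y \<eta>)) has_derivative
           (\<lambda>h. (\<integral>\<omega>. transpose (Jf (fst \<omega>)) *v (sYT (T \<omega>) (Y \<eta>0 \<omega>) - sY (Y \<eta>0 \<omega>)) \<partial>M) \<bullet> h))
         (at \<eta>0)"
proof -
  have G: "prob_space (gauss_vec t :: (real^'m) measure)" by (rule prob_space_gauss_vec[OF t_pos])
  interpret PP: pair_prob_space \<mu> "gauss_vec t :: (real^'m) measure"
    using prob_X G by (simp add: pair_prob_space_def pair_sigma_finite_def prob_space_imp_sigma_finite)
  have PM: "prob_space M" unfolding M_def by (rule PP.P.prob_space_axioms)
  have sG: "sets (gauss_vec t :: (real^'m) measure) = sets borel" by (simp add: gauss_vec_def)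
  have sM: "sets M = sets (borel \<Otimes>\<^sub>M (borel :: (real^'m) measure))"
    unfolding M_def by (rule sets_pair_measure_cong[OF sets_X sG])
  have spM: "space M = UNIV" using sets_eq_imp_space_eq[OF sM] by (simp add: space_pair_measure)
  have T_meas: "T \<in> M \<rightarrow>\<^sub>M S"
    unfolding measurable_cong_sets[OF sM refl] T_def
    using g_meas by measurable
  have Y_meas: "\<And>\<eta>. Y \<eta> \<in> M \<rightarrow>\<^sub>M borel"
    unfolding measurable_cong_sets[OF sM refl] Y_def
    using f_meas by measurable
  have TY_meas: "\<And>\<eta>. (\<lambda>\<omega>. (T \<omega>, Y \<eta> \<omega>)) \<in> M \<rightarrow>\<^sub>M S \<Otimes>\<^sub>M borel"
    using T_meas Y_meas by measurable
  have \<nu>_eq: "\<nu> = distr M S T" unfolding \<nu>_def M_def T_def ..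
  have P\<nu>: "prob_space \<nu>" unfolding \<nu>_eq by (rule prob_space.prob_space_distr[OF PM T_meas])
  have s\<nu>: "sets \<nu> = sets S" unfolding \<nu>_eq by simp
  have sp\<nu>: "space \<nu> = space S" unfolding \<nu>_eq by simp
  interpret PN: pair_sigma_finite \<nu> lborel
    using P\<nu> by (simp add: pair_sigma_finite_def prob_space_imp_sigma_finite lborel.sigma_finite_measure_axioms)
  have sNL: "sets (\<nu> \<Otimes>\<^sub>M lborel) = sets (S \<Otimes>\<^sub>M (borel :: (real^'m) measure))"
    by (rule sets_pair_measure_cong[OF s\<nu>]) simp

  have MI: "\<And>\<eta>. prob_space.mutual_information M (exp 1) S borel T (Y \<eta>) = (\<integral>\<omega>. L \<eta> \<omega> \<partial>M)"
  proof -
    fix \<eta>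
    interpret IS: information_space M "exp 1"
      unfolding information_space_def information_space_axioms_def using PM by simp
    have d1: "distr M S T = distr M \<nu> T" by (rule distr_cong) (simp_all add: s\<nu>)
    have d2: "distr M borel (Y \<eta>) = distr M lborel (Y \<eta>)" by (rule distr_cong) simp_all
    have d3: "distr M (S \<Otimes>\<^sub>M borel) (\<lambda>\<omega>. (T \<omega>, Y \<eta> \<omega>)) = distr M (\<nu> \<Otimes>\<^sub>M lborel) (\<lambda>\<omega>. (T \<omega>, Y \<eta> \<omega>))"
      by (rule distr_cong) (use sNL in simp_all)
    have e1: "prob_space.mutual_information M (exp 1) S borel T (Y \<eta>)
        = prob_space.mutual_information M (exp 1) \<nu> lborel T (Y \<eta>)"
      unfolding prob_space.mutual_information_def[OF PM] d1 d2 d3 ..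
    have sf\<nu>: "sigma_finite_measure \<nu>" using P\<nu> by (rule prob_space_imp_sigma_finite)
    have sfL: "sigma_finite_measure (lborel :: (real^'m) measure)" by (rule lborel.sigma_finite_measure_axioms)
    have Px: "distributed M \<nu> T (\<lambda>x. ennreal 1)"
      unfolding distributed_def
    proof (intro conjI)
      show "distr M \<nu> T = density \<nu> (\<lambda>x. ennreal 1)" using \<nu>_eq d1 by (simp add: density_1)
      show "(\<lambda>x. ennreal 1) \<in> borel_measurable \<nu>" by simp
      show "T \<in> M \<rightarrow>\<^sub>M \<nu>" unfolding measurable_cong_sets[OF refl s\<nu>] by (rule T_meas)
    qed
    have Py: "distributed M lborel (Y \<eta>) (\<lambda>y. ennreal (pY \<eta> y))"
      unfolding distributed_def using d2 pY_dens[of \<eta>] pY_meas[of \<eta>] Y_meas[of \<eta>] by simp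
    have Pxy: "distributed M (\<nu> \<Otimes>\<^sub>M lborel) (\<lambda>\<omega>. (T \<omega>, Y \<eta> \<omega>)) (\<lambda>p. ennreal (pYT \<eta> (fst p) (snd p)))"
      unfolding distributed_def
    proof (intro conjI)
      show "distr M (\<nu> \<Otimes>\<^sub>M lborel) (\<lambda>\<omega>. (T \<omega>, Y \<eta> \<omega>)) = density (\<nu> \<Otimes>\<^sub>M lborel) (\<lambda>p. ennreal (pYT \<eta> (fst p) (snd p)))"
        using d3 pYT_dens[of \<eta>] by (simp add: split_beta')
      have "(\<lambda>p. pYT \<eta> (fst p) (snd p)) \<in> borel_measurable (S \<Otimes>\<^sub>M borel)"
        using pYT_meas[of \<eta>] by (simp add: split_beta')
      then have "(\<lambda>p. pYT \<eta> (fst p) (snd p)) \<in> borel_measurable (\<nu> \<Otimes>\<^sub>M lborel)"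
        unfolding measurable_cong_sets[OF sNL refl] .
      then show "(\<lambda>p. ennreal (pYT \<eta> (fst p) (snd p))) \<in> borel_measurable (\<nu> \<Otimes>\<^sub>M lborel)" by measurable
      show "(\<lambda>\<omega>. (T \<omega>, Y \<eta> \<omega>)) \<in> M \<rightarrow>\<^sub>M \<nu> \<Otimes>\<^sub>M lborel"
        unfolding measurable_cong_sets[OF refl sNL] by (rule TY_meas)
    qed
    define \<phi> where "\<phi> = (\<lambda>p::'c \<times> (real^'m). ln (pYT \<eta> (fst p) (snd p)) - ln (pY \<eta> (snd p)))"
    have \<phi>_meas: "\<phi> \<in> borel_measurable (S \<Otimes>\<^sub>M borel)"
    proof -
      have "(\<lambda>p. pYT \<eta> (fst p) (snd p)) \<in> borel_measurable (S \<Otimes>\<^sub>M borel)"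
        using pYT_meas[of \<eta>] by (simp add: split_beta')
      then show ?thesis unfolding \<phi>_def using pY_meas[of \<eta>] by measurable
    qed
    have \<phi>_meas': "\<phi> \<in> borel_measurable (\<nu> \<Otimes>\<^sub>M lborel)"
      unfolding measurable_cong_sets[OF sNL refl] by (rule \<phi>_meas)
    have P_meas': "(\<lambda>p. pYT \<eta> (fst p) (snd p)) \<in> borel_measurable (\<nu> \<Otimes>\<^sub>M lborel)"
    proof -
      have "(\<lambda>p. pYT \<eta> (fst p) (snd p)) \<in> borel_measurable (S \<Otimes>\<^sub>M borel)"
        using pYT_meas[of \<eta>] by (simp add: split_beta')
      then show ?thesis unfolding measurable_cong_sets[OF sNL refl] .
    qed
    have "prob_space.mutual_information M (exp 1) \<nu> lborel T (Y \<eta>)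
        = (\<integral>p. pYT \<eta> (fst p) (snd p) * log (exp 1) (pYT \<eta> (fst p) (snd p) / (1 * pY \<eta> (snd p))) \<partial>(\<nu> \<Otimes>\<^sub>M lborel))"
      by (rule IS.mutual_information_distr[OF sf\<nu> sfL Px _ Py _ Pxy]) (use pY_pos pYT_pos in \<open>auto intro: less_imp_le\<close>)
    also have "\<dots> = (\<integral>p. pYT \<eta> (fst p) (snd p) *\<^sub>R \<phi> p \<partial>(\<nu> \<Otimes>\<^sub>M lborel))"
    proof (rule Bochner_Integration.integral_cong[OF refl])
      fix p :: "'c \<times> (real^'m)"
      have "log (exp 1) (pYT \<eta> (fst p) (snd p) / (1 * pY \<eta> (snd p))) = \<phi> p"
      proof -
        have a: "pYT \<eta> (fst p) (snd p) > 0" by (rule pYT_pos)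
        have b: "pY \<eta> (snd p) > 0" by (rule pY_pos)
        show ?thesis unfolding \<phi>_def log_def using a b by (simp add: ln_div)
      qed
      then show "pYT \<eta> (fst p) (snd p) * log (exp 1) (pYT \<eta> (fst p) (snd p) / (1 * pY \<eta> (snd p)))
          = pYT \<eta> (fst p) (snd p) *\<^sub>R \<phi> p" by simp
    qed
    also have "\<dots> = (\<integral>p. \<phi> p \<partial>(density (\<nu> \<Otimes>\<^sub>M lborel) (\<lambda>p. ennreal (pYT \<eta> (fst p) (snd p)))))"
      by (rule integral_density[symmetric]) (use \<phi>_meas' P_meas' pYT_pos in \<open>auto intro!: AE_I2 less_imp_le\<close>)
    also have "\<dots> = (\<integral>p. \<phi> p \<partial>(distr M (S \<Otimes>\<^sub>M borel) (\<lambda>\<omega>. (T \<omega>, Y \<eta> \<omega>))))"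
      using pYT_dens[of \<eta>] by (simp add: split_beta')
    also have "\<dots> = (\<integral>\<omega>. \<phi> (T \<omega>, Y \<eta> \<omega>) \<partial>M)"
      by (rule integral_distr[OF TY_meas \<phi>_meas])
    also have "\<dots> = (\<integral>\<omega>. L \<eta> \<omega> \<partial>M)"
      unfolding \<phi>_def L_def T_def Y_def by simp
    finally show "prob_space.mutual_information M (exp 1) S borel T (Y \<eta>) = (\<integral>\<omega>. L \<eta> \<omega> \<partial>M)"
      using e1 by simp
  qed

  define aT where "aT = (\<lambda>\<omega>. grad (\<lambda>\<eta>. ln (pYT \<eta> (T \<omega>) (Y \<eta>0 \<omega>))) \<eta>0)"
  define aY where "aY = (\<lambda>\<omega>. grad (\<lambda>\<eta>. ln (pY \<eta> (Y \<eta>0 \<omega>))) \<eta>0)"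
  define JS where "JS = (\<lambda>\<omega>. transpose (Jf (fst \<omega>)) *v (sYT (T \<omega>) (Y \<eta>0 \<omega>) - sY (Y \<eta>0 \<omega>)))"
  have pw: "\<And>\<omega>. grad (\<lambda>\<eta>. L \<eta> \<omega>) \<eta>0 = JS \<omega> + aT \<omega> - aY \<omega>"
  proof -
    fix \<omega> :: "(real^'n) \<times> (real^'m)"
    obtain x z where \<omega>: "\<omega> = (x, z)" by fastforce
    define y0 where "y0 = f \<eta>0 x + z"
    define FT where "FT = (\<lambda>p::(real^'d) \<times> (real^'m). ln (pYT (fst p) (g x) (snd p)))"
    define FY where "FY = (\<lambda>p::(real^'d) \<times> (real^'m). ln (pY (fst p) (snd p)))"
    have u: "((\<lambda>\<eta>. f \<eta> x + z) has_derivative (\<lambda>h. Jf x *v h)) (at \<eta>0)"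
      using has_derivative_add[OF f_diff has_derivative_const] by simp
    have dFT: "FT differentiable (at (\<eta>0, y0))"
      unfolding FT_def by (rule differentiable_ln) (use pYT_diff pYT_pos in auto)
    have dFY: "FY differentiable (at (\<eta>0, y0))"
      unfolding FY_def by (rule differentiable_ln) (use pY_diff pY_pos in auto)
    note cT = chain2[OF dFT u y0_def[symmetric]]
    note cY = chain2[OF dFY u y0_def[symmetric]]
    have "((\<lambda>\<eta>. L \<eta> \<omega>) has_derivative
        (\<lambda>h. (grad (\<lambda>x. FT (x, y0)) \<eta>0 \<bullet> h + grad (\<lambda>y. FT (\<eta>0, y)) y0 \<bullet> (Jf x *v h)) -
             (grad (\<lambda>x. FY (x, y0)) \<eta>0 \<bullet> h + grad (\<lambda>y. FY (\<eta>0, y)) y0 \<bullet> (Jf x *v h)))) (at \<eta>0)"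
      using has_derivative_diff[OF cT cY] unfolding L_def \<omega> FT_def FY_def by simp
    also have "(\<lambda>h. (grad (\<lambda>x. FT (x, y0)) \<eta>0 \<bullet> h + grad (\<lambda>y. FT (\<eta>0, y)) y0 \<bullet> (Jf x *v h)) -
             (grad (\<lambda>x. FY (x, y0)) \<eta>0 \<bullet> h + grad (\<lambda>y. FY (\<eta>0, y)) y0 \<bullet> (Jf x *v h)))
        = (\<lambda>h. (JS \<omega> + aT \<omega> - aY \<omega>) \<bullet> h)"
      unfolding JS_def aT_def aY_def sY_def sYT_def T_def Y_def \<omega> FT_def FY_def y0_def
      by (auto simp: fun_eq_iff inner_transpose inner_add_left inner_diff_left inner_diff_right vector_matrix_mult_diff_distrib)
    finally show "grad (\<lambda>\<eta>. L \<eta> \<omega>) \<eta>0 = JS \<omega> + aT \<omega> - aY \<omega>" by (rule grad_eq)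
  qed
  have aT0: "(\<integral>\<omega>. aT \<omega> \<partial>M) = 0"
  proof -
    have dpt: "\<And>\<tau> y. (\<lambda>\<eta>. pYT \<eta> \<tau> y) differentiable (at \<eta>0)"
      using diff_slice1[OF pYT_diff] by simp
    have pYT_meas': "\<And>\<eta>. (\<lambda>p. pYT \<eta> (fst p) (snd p)) \<in> borel_measurable (S \<Otimes>\<^sub>M borel)"
      using pYT_meas by (simp add: split_beta')
    define K where "K = (\<lambda>p::'c \<times> (real^'m). grad (\<lambda>\<eta>. pYT \<eta> (fst p) (snd p)) \<eta>0)"
    have K_meas: "K \<in> borel_measurable (S \<Otimes>\<^sub>M borel)"
      unfolding K_def by (rule grad_measurable) (use pYT_meas' dpt in auto)
    define H where "H = (\<lambda>p::'c \<times> (real^'m). (1 / pYT \<eta>0 (fst p) (snd p)) *\<^sub>R K p)"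
    have H_meas: "H \<in> borel_measurable (S \<Otimes>\<^sub>M borel)"
      unfolding H_def using K_meas pYT_meas'[of \<eta>0] by measurable
    have H_eq: "\<And>\<tau> y. grad (\<lambda>\<eta>. ln (pYT \<eta> \<tau> y)) \<eta>0 = H (\<tau>, y)"
      unfolding H_def K_def by (simp add: grad_ln[OF dpt pYT_pos])
    have aT_eq: "aT = (\<lambda>\<omega>. H (T \<omega>, Y \<eta>0 \<omega>))" unfolding aT_def H_eq ..
    have dens_eq: "distr M (S \<Otimes>\<^sub>M borel) (\<lambda>\<omega>. (T \<omega>, Y \<eta>0 \<omega>))
        = density (\<nu> \<Otimes>\<^sub>M lborel) (\<lambda>p. ennreal (pYT \<eta>0 (fst p) (snd p)))"
      using pYT_dens[of \<eta>0] by (simp add: split_beta')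
    have H_meas': "H \<in> borel_measurable (\<nu> \<Otimes>\<^sub>M lborel)"
      unfolding measurable_cong_sets[OF sNL refl] by (rule H_meas)
    have P_meas': "(\<lambda>p. pYT \<eta>0 (fst p) (snd p)) \<in> borel_measurable (\<nu> \<Otimes>\<^sub>M lborel)"
      unfolding measurable_cong_sets[OF sNL refl] by (rule pYT_meas')
    have iaT: "integrable M aT" using dpYT_int unfolding aT_def .
    have "integrable (distr M (S \<Otimes>\<^sub>M borel) (\<lambda>\<omega>. (T \<omega>, Y \<eta>0 \<omega>))) H"
      using integrable_distr_eq[OF TY_meas H_meas] iaT unfolding aT_eq by simp
    then have "integrable (density (\<nu> \<Otimes>\<^sub>M lborel) (\<lambda>p. ennreal (pYT \<eta>0 (fst p) (snd p)))) H"
      unfolding dens_eq .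
    then have iPH: "integrable (\<nu> \<Otimes>\<^sub>M lborel) (\<lambda>p. pYT \<eta>0 (fst p) (snd p) *\<^sub>R H p)"
      by (subst (asm) integrable_density) (use H_meas' P_meas' pYT_pos in \<open>auto intro!: AE_I2 less_imp_le\<close>)
    have PH_K: "(\<lambda>p. pYT \<eta>0 (fst p) (snd p) *\<^sub>R H p) = K"
    proof
      fix p :: "'c \<times> (real^'m)"
      have "pYT \<eta>0 (fst p) (snd p) \<noteq> 0" using pYT_pos by (metis less_irrefl)
      then show "pYT \<eta>0 (fst p) (snd p) *\<^sub>R H p = K p" unfolding H_def by simp
    qed
    have iK: "integrable (\<nu> \<Otimes>\<^sub>M lborel) K" using iPH unfolding PH_K .
    have inner0: "\<And>\<tau>. \<tau> \<in> space \<nu> \<Longrightarrow> (\<integral>y. K (\<tau>, y) \<partial>lborel) = 0"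
    proof -
      fix \<tau> assume "\<tau> \<in> space \<nu>"
      then have \<tau>: "\<tau> \<in> space S" using sp\<nu> by simp
      define I where "I = (\<integral>y. grad (\<lambda>\<eta>. pYT \<eta> \<tau> y) \<eta>0 \<partial>lborel)"
      have d0: "((\<lambda>\<eta>. \<integral>y. pYT \<eta> \<tau> y \<partial>lborel) has_derivative (\<lambda>h. 0)) (at \<eta>0)"
        using pYT_norm by (simp add: has_derivative_const)
      have d1: "((\<lambda>\<eta>. \<integral>y. pYT \<eta> \<tau> y \<partial>lborel) has_derivative (\<lambda>h. I \<bullet> h)) (at \<eta>0)"
        using exch_pYT[OF \<tau>] unfolding I_def by blast
      have "(\<lambda>h. 0) = (\<lambda>h. I \<bullet> h)" by (rule has_derivative_unique[OF d0 d1])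
      then have "I \<bullet> I = 0" by metis
      then show "(\<integral>y. K (\<tau>, y) \<partial>lborel) = 0" unfolding K_def I_def by simp
    qed
    have "(\<integral>\<omega>. aT \<omega> \<partial>M) = (\<integral>p. H p \<partial>(distr M (S \<Otimes>\<^sub>M borel) (\<lambda>\<omega>. (T \<omega>, Y \<eta>0 \<omega>))))"
      unfolding aT_eq by (rule integral_distr[OF TY_meas H_meas, symmetric])
    also have "\<dots> = (\<integral>p. H p \<partial>(density (\<nu> \<Otimes>\<^sub>M lborel) (\<lambda>p. ennreal (pYT \<eta>0 (fst p) (snd p)))))"
      unfolding dens_eq ..
    also have "\<dots> = (\<integral>p. pYT \<eta>0 (fst p) (snd p) *\<^sub>R H p \<partial>(\<nu> \<Otimes>\<^sub>M lborel))"
      by (rule integral_density) (use H_meas' P_meas' pYT_pos in \<open>auto intro!: AE_I2 less_imp_le\<close>)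
    also have "\<dots> = (\<integral>p. K p \<partial>(\<nu> \<Otimes>\<^sub>M lborel))" unfolding PH_K ..
    also have "\<dots> = (\<integral>\<tau>. (\<integral>y. K (\<tau>, y) \<partial>lborel) \<partial>\<nu>)"
      by (rule PN.integral_fst'[OF iK, symmetric])
    also have "\<dots> = (\<integral>\<tau>. 0 \<partial>\<nu>)"
      by (rule Bochner_Integration.integral_cong[OF refl inner0])
    finally show ?thesis by simp
  qed
  have aY0: "(\<integral>\<omega>. aY \<omega> \<partial>M) = 0"
  proof -
    have dpy: "\<And>y. (\<lambda>\<eta>. pY \<eta> y) differentiable (at \<eta>0)"
      using diff_slice1[OF pY_diff] by simp
    define K where "K = (\<lambda>y. grad (\<lambda>\<eta>. pY \<eta> y) \<eta>0)"
    have iK: "integrable lborel K" using exch_pY unfolding K_def by blast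
    have K_meas: "K \<in> borel_measurable borel"
      using borel_measurable_integrable[OF iK] by simp
    define GY where "GY = (\<lambda>y. (1 / pY \<eta>0 y) *\<^sub>R K y)"
    have GY_eq: "\<And>y. grad (\<lambda>\<eta>. ln (pY \<eta> y)) \<eta>0 = GY y"
      unfolding GY_def K_def by (rule grad_ln[OF dpy pY_pos])
    have aY_eq: "aY = (\<lambda>\<omega>. GY (Y \<eta>0 \<omega>))" unfolding aY_def GY_eq ..
    have GY_meas: "GY \<in> borel_measurable borel"
      unfolding GY_def using K_meas pY_meas by measurable
    have one: "\<And>\<eta>. (\<integral>y. pY \<eta> y \<partial>lborel) = 1"
    proof -
      fix \<eta>
      have "prob_space (density lborel (\<lambda>y. ennreal (pY \<eta> y)))"
        using prob_space.prob_space_distr[OF PM Y_meas[of \<eta>]] pY_dens[of \<eta>] by simp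
      then have "emeasure (density lborel (\<lambda>y. ennreal (pY \<eta> y))) UNIV = 1"
        using prob_space.emeasure_space_1 by fastforce
      then have "(\<integral>\<^sup>+y. ennreal (pY \<eta> y) \<partial>lborel) = 1"
        using pY_meas by (simp add: emeasure_density)
      then show "(\<integral>y. pY \<eta> y \<partial>lborel) = 1"
        using pY_meas pY_pos by (subst integral_eq_nn_integral) (auto intro!: AE_I2 less_imp_le)
    qed
    have IK0: "(\<integral>y. K y \<partial>lborel) = 0"
    proof -
      have d0: "((\<lambda>\<eta>. \<integral>y. pY \<eta> y \<partial>lborel) has_derivative (\<lambda>h. 0)) (at \<eta>0)"
        unfolding one by (rule has_derivative_const)
      have d1: "((\<lambda>\<eta>. \<integral>y. pY \<eta> y \<partial>lborel) has_derivative (\<lambda>h. (\<integral>y. K y \<partial>lborel) \<bullet> h)) (at \<eta>0)"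
        using exch_pY unfolding K_def by blast
      have "(\<lambda>h. 0) = (\<lambda>h. (\<integral>y. K y \<partial>lborel) \<bullet> h)" by (rule has_derivative_unique[OF d0 d1])
      then have "(\<integral>y. K y \<partial>lborel) \<bullet> (\<integral>y. K y \<partial>lborel) = 0" by metis
      then show ?thesis by simp
    qed
    have "(\<integral>\<omega>. aY \<omega> \<partial>M) = (\<integral>y. GY y \<partial>(distr M borel (Y \<eta>0)))"
      unfolding aY_eq by (rule integral_distr[OF Y_meas GY_meas, symmetric])
    also have "\<dots> = (\<integral>y. GY y \<partial>(density lborel (\<lambda>y. ennreal (pY \<eta>0 y))))"
      unfolding pY_dens ..
    also have "\<dots> = (\<integral>y. pY \<eta>0 y *\<^sub>R GY y \<partial>lborel)"
      by (rule integral_density) (use GY_meas pY_meas pY_pos in \<open>auto intro!: AE_I2 less_imp_le\<close>)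
    also have "\<dots> = (\<integral>y. K y \<partial>lborel)"
    proof -
      have "\<And>y. pY \<eta>0 y \<noteq> 0" using pY_pos by (metis less_irrefl)
      then show ?thesis unfolding GY_def by simp
    qed
    finally show ?thesis using IK0 by simp
  qed
  have iaT: "integrable M aT" using dpYT_int unfolding aT_def .
  have iaY: "integrable M aY" using dpY_int unfolding aY_def .
  have JS_eq: "JS = (\<lambda>\<omega>. grad (\<lambda>\<eta>. L \<eta> \<omega>) \<eta>0 - aT \<omega> + aY \<omega>)"
    using pw by (auto simp: fun_eq_iff)
  have iJS: "integrable M JS" unfolding JS_eq using dL_int iaT iaY by simp
  have int_eq: "(\<integral>\<omega>. grad (\<lambda>\<eta>. L \<eta> \<omega>) \<eta>0 \<partial>M) = (\<integral>\<omega>. JS \<omega> \<partial>M)"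
  proof -
    have "(\<integral>\<omega>. grad (\<lambda>\<eta>. L \<eta> \<omega>) \<eta>0 \<partial>M) = (\<integral>\<omega>. JS \<omega> + aT \<omega> - aY \<omega> \<partial>M)"
      using pw by simp
    also have "\<dots> = (\<integral>\<omega>. JS \<omega> \<partial>M) + (\<integral>\<omega>. aT \<omega> \<partial>M) - (\<integral>\<omega>. aY \<omega> \<partial>M)"
      using iJS iaT iaY by simp
    finally show ?thesis using aT0 aY0 by simp
  qed
  have "(\<lambda>\<eta>. prob_space.mutual_information M (exp 1) S borel T (Y \<eta>)) = (\<lambda>\<eta>. \<integral>\<omega>. L \<eta> \<omega> \<partial>M)"
    using MI by auto
  then show ?thesis using exch_E unfolding int_eq JS_def by simp
qed

end
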